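(* Let $\Omega\subset\mathbb{R}^n$ be open and $f\in C^2(\Omega)\cap C(\bar\Omega)$ with $|\mathbf Hf(x)|\le1$ for all $x\in\Omega$, where $\mathbf Hf$ is the Hessian matrix and $|\cdot|$ its operator norm. Then for all $\sigma,\eta>0$, $$\{x\in\Omega:|f(x)|\le\sigma\eta\}\subset\{x\in\Omega:|\nabla f(x)|\le\sigma+\eta\}\cup N_\sigma\Big(\partial\Omega\cup\big(\{f=0\}\cap\{|\nabla f|>\eta\}\big)\Big).$$
   Context: $N_\sigma(E)$ denotes the (open) $\sigma$-neighborhood of a set $E$; the sets $\{f=0\}$ and $\{|\nabla f|>\eta\}$ are subsets of $\Omega$. *)

theory Defs
  imports "HOL-Analysis.Analysis"
begin

definition nbhd :: "real \<Rightarrow> ('a::metric_space) set \<Rightarrow> 'a set" where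
  "nbhd \<sigma> E = {x. \<exists>y\<in>E. dist x y < \<sigma>}"

end

theory Submission
  imports Defs
begin

theorem mainTheorem6:
  fixes \<Omega> :: "(real^'n) set"
    and f :: "real^'n \<Rightarrow> real"
    and Df :: "real^'n \<Rightarrow> real^'n"
    and Hf :: "real^'n \<Rightarrow> real^'n^'n"
    and \<sigma> \<eta> :: real
  assumes "open \<Omega>"
    and grad: "\<And>x. x \<in> \<Omega> \<Longrightarrow> (f has_derivative (\<lambda>h. Df x \<bullet> h)) (at x)"
    and hess: "\<And>x. x \<in> \<Omega> \<Longrightarrow> (Df has_derivative (\<lambda>h. Hf x *v h)) (at x)"
    and "continuous_on \<Omega> Hf"
    and "continuous_on (closure \<Omega>) f"
    and "\<And>x. x \<in> \<Omega> \<Longrightarrow> onorm (\<lambda>h. Hf x *v h) \<le> 1"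
    and "\<sigma> > 0" and "\<eta> > 0"
  shows "{x\<in>\<Omega>. \<bar>f x\<bar> \<le> \<sigma> * \<eta>} \<subseteq>
           {x\<in>\<Omega>. norm (Df x) \<le> \<sigma> + \<eta>} \<union>
           nbhd \<sigma> (frontier \<Omega> \<union> ({x\<in>\<Omega>. f x = 0} \<inter> {x\<in>\<Omega>. norm (Df x) > \<eta>}))"
proof
  fix x assume xA: "x \<in> {x\<in>\<Omega>. \<bar>f x\<bar> \<le> \<sigma> * \<eta>}"
  hence xO: "x \<in> \<Omega>" and fx: "\<bar>f x\<bar> \<le> \<sigma> * \<eta>" by auto
  let ?E = "frontier \<Omega> \<union> ({x\<in>\<Omega>. f x = 0} \<inter> {x\<in>\<Omega>. norm (Df x) > \<eta>})"
  show "x \<in> {x\<in>\<Omega>. norm (Df x) \<le> \<sigma> + \<eta>} \<union> nbhd \<sigma> ?E"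
  proof (cases "norm (Df x) \<le> \<sigma> + \<eta>")
    case True then show ?thesis using xO by auto
  next
    case False
    hence dbig: "norm (Df x) > \<sigma> + \<eta>" by simp
    show ?thesis
    proof (cases "ball x \<sigma> \<subseteq> \<Omega>")
      case False
      have "ball x \<sigma> \<inter> frontier \<Omega> \<noteq> {}"
        by (rule connected_Int_frontier) (use False xO \<open>\<sigma> > 0\<close> centre_in_ball in blast)+
      then obtain z where "z \<in> ball x \<sigma>" "z \<in> frontier \<Omega>" by auto
      thus ?thesis unfolding nbhd_def by auto
    next
      case True
      define d where "d = norm (Df x)"
      define \<epsilon> where "\<epsilon> = d - \<sigma> - \<eta>"
      have \<epsilon>: "\<epsilon> > 0" using dbig unfolding \<epsilon>_def d_def by simp
      have dpos: "d > 0" using dbig \<open>\<sigma> > 0\<close> \<open>\<eta> > 0\<close> unfolding d_def by linarith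
      define s :: real where "s = (if f x \<ge> 0 then 1 else -1)"
      have ss: "s * s = 1" unfolding s_def by auto
      have sfx: "s * f x = \<bar>f x\<bar>" unfolding s_def by auto
      have abss: "\<bar>s\<bar> = 1" unfolding s_def by auto
      define u where "u = (- s / d) *\<^sub>R Df x"
      have nu: "norm u = 1" unfolding u_def using abss dpos by (simp add: d_def)
      have sDu: "s * (Df x \<bullet> u) = - d"
      proof -
        have "s * (Df x \<bullet> u) = - (s * s) / d * (Df x \<bullet> Df x)" unfolding u_def by (simp add: field_simps)
        also have "\<dots> = - d" using ss dpos by (simp add: d_def power2_norm_eq_inner[symmetric] power2_eq_square)
        finally show ?thesis .
      qed
      have lip: "norm (Df y - Df x) \<le> norm (y - x)" if "y \<in> ball x \<sigma>" for y
      proof -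
        have "norm (Df y - Df x) \<le> 1 * norm (y - x)"
        proof (rule differentiable_bound[where S="ball x \<sigma>" and f'="\<lambda>z h. Hf z *v h"])
          show "convex (ball x \<sigma>)" by simp
          show "(Df has_derivative (\<lambda>h. Hf z *v h)) (at z within ball x \<sigma>)" if "z \<in> ball x \<sigma>" for z
            using hess[of z] True that has_derivative_at_withinI by blast
          show "onorm (\<lambda>h. Hf z *v h) \<le> 1" if "z \<in> ball x \<sigma>" for z using assms(6)[of z] True that by blast
        qed (use that \<open>\<sigma> > 0\<close> in auto)
        thus ?thesis by simp
      qed
      have yball: "x + t *\<^sub>R u \<in> ball x \<sigma>" if "0 \<le> t" "t < \<sigma>" for t
        using that nu by (simp add: dist_norm)
      have slope: "s * (Df (x + t *\<^sub>R u) \<bullet> u) \<le> - (\<eta> + \<epsilon>)" if "0 \<le> t" "t < \<sigma>" for t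
      proof -
        let ?y = "x + t *\<^sub>R u"
        have "s * (Df ?y \<bullet> u) = s * (Df x \<bullet> u) + s * ((Df ?y - Df x) \<bullet> u)"
          by (simp add: inner_diff_left algebra_simps)
        also have "s * ((Df ?y - Df x) \<bullet> u) \<le> \<bar>(Df ?y - Df x) \<bullet> u\<bar>"
          using abss by (metis abs_ge_self abs_mult mult_1)
        also have "\<bar>(Df ?y - Df x) \<bullet> u\<bar> \<le> norm (Df ?y - Df x) * norm u"
          by (rule Cauchy_Schwarz_ineq2)
        also have "\<dots> \<le> norm (?y - x)" using lip[OF yball[OF that]] nu by simp
        also have "\<dots> = t" using nu that by simp
        finally show ?thesis using sDu that unfolding \<epsilon>_def by simp
      qed
      define g where "g t = s * f (x + t *\<^sub>R u)" for t
      have gder: "(g has_derivative (\<lambda>h. s * (Df (x + t *\<^sub>R u) \<bullet> (h *\<^sub>R u)))) (at t)"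
        if "0 \<le> t" "t < \<sigma>" for t
      proof -
        have y: "x + t *\<^sub>R u \<in> \<Omega>" using yball[OF that] True by auto
        have l: "((\<lambda>t. x + t *\<^sub>R u) has_derivative (\<lambda>h. h *\<^sub>R u)) (at t)"
          by (auto intro!: derivative_eq_intros)
        have "((\<lambda>t. f (x + t *\<^sub>R u)) has_derivative (\<lambda>h. Df (x + t *\<^sub>R u) \<bullet> (h *\<^sub>R u))) (at t)"
          using has_derivative_compose[OF l grad[OF y]] by (simp add: o_def)
        hence "((\<lambda>t. s * f (x + t *\<^sub>R u)) has_derivative (\<lambda>h. s * (Df (x + t *\<^sub>R u) \<bullet> (h *\<^sub>R u)))) (at t)"
          by (rule has_derivative_mult_right)
        thus ?thesis unfolding g_def[abs_def] .
      qed
      define t1 where "t1 = \<sigma> * (2*\<eta> + \<epsilon>) / (2*\<eta> + 2*\<epsilon>)"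
      have t1pos: "0 < t1" unfolding t1_def using \<epsilon> \<open>\<sigma> > 0\<close> \<open>\<eta> > 0\<close> by simp
      have t1lt: "t1 < \<sigma>" unfolding t1_def using \<epsilon> \<open>\<sigma> > 0\<close> \<open>\<eta> > 0\<close> by (simp add: field_simps)
      have t1big: "t1 * (\<eta> + \<epsilon>) > \<sigma> * \<eta>"
      proof -
        have "t1 * (\<eta> + \<epsilon>) = \<sigma> * (2*\<eta> + \<epsilon>) / 2" unfolding t1_def using \<epsilon> \<open>\<eta> > 0\<close>
          by (simp add: field_simps)
        thus ?thesis using mult_pos_pos[OF \<epsilon> \<open>\<sigma> > 0\<close>] by (simp add: algebra_simps)
      qed
      have gcont: "continuous_on {0..t1} g"
        using gder t1lt by (intro continuous_at_imp_continuous_on ballI) (meson atLeastAtMost_iff has_derivative_continuous le_less_trans)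
      obtain \<xi> where \<xi>: "0 < \<xi>" "\<xi> < t1" "g t1 - g 0 = s * (Df (x + \<xi> *\<^sub>R u) \<bullet> ((t1 - 0) *\<^sub>R u))"
        using mvt[OF t1pos gcont, of "\<lambda>t h. s * (Df (x + t *\<^sub>R u) \<bullet> (h *\<^sub>R u))"] gder t1lt by auto
      have "g t1 - g 0 = t1 * (s * (Df (x + \<xi> *\<^sub>R u) \<bullet> u))" using \<xi>(3) by simp
      also have "\<dots> \<le> t1 * (- (\<eta> + \<epsilon>))"
        using slope[of \<xi>] \<xi> t1lt t1pos by (intro mult_left_mono) auto
      finally have "g t1 \<le> g 0 - t1 * (\<eta> + \<epsilon>)" by (simp add: algebra_simps)
      moreover have g0: "g 0 = \<bar>f x\<bar>" unfolding g_def using sfx by simp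
      ultimately have "g t1 \<le> 0" using fx t1big by simp
      then obtain t where t: "0 \<le> t" "t \<le> t1" "g t = 0"
        using IVT2'[of g t1 0 0, OF _ _ _ gcont] g0 t1pos by auto
      let ?y = "x + t *\<^sub>R u"
      have yb: "?y \<in> ball x \<sigma>" using yball[of t] t t1lt by simp
      hence yO: "?y \<in> \<Omega>" using True by auto
      have fy: "f ?y = 0" using t(3) ss unfolding g_def by (metis mult_zero_right mult.left_neutral mult.assoc mult.commute)
      have "- (\<eta> + \<epsilon>) \<ge> s * (Df ?y \<bullet> u)" using slope[of t] t t1lt by simp
      moreover have "s * (Df ?y \<bullet> u) \<ge> - norm (Df ?y)"
      proof -
        have "\<bar>s * (Df ?y \<bullet> u)\<bar> \<le> norm (Df ?y) * norm u"
          using abss Cauchy_Schwarz_ineq2[of "Df ?y" u] by (simp add: abs_mult)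
        thus ?thesis using nu by (simp add: abs_le_iff)
      qed
      ultimately have "norm (Df ?y) > \<eta>" using \<epsilon> by linarith
      hence "?y \<in> ?E" using yO fy by auto
      moreover have "dist x ?y < \<sigma>" using yb by simp
      ultimately show ?thesis unfolding nbhd_def by blast
    qed
  qed
qed

end
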